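(* Let $n$ be a positive integer and let $A(n)=(a_{ij})_{i,j\in\mathbb{N}}$ be the greedy matrix described in the context. For every $k\geq 1$, the length of the $k$-th row of $A(n)$ is less than $2n^3-n(n-3)$.
   Context: $\mathbb{N}=\{1,2,3,\dots\}$. Fix a positive integer $n$. The infinite $\{0,1\}$-matrix $A(n)=(a_{ij})_{i,j\in\mathbb{N}}$ is defined recursively. Its entries are determined row by row (row $1$ first), and within each row from left to right, so that $a_{kl}$ is determined after all $a_{ij}$ with $i<k$ and all $a_{kj}$ with $j<l$. One sets $a_{kl}=1$ if and only if all of the following hold: (1) $\sum_{j<l}a_{kj}<n+1$; (2) $\sum_{i<k}a_{il}<n+1$; (3) there is no pair $(i,j)$ with $1\le i<k$, $1\le j<l$ and $a_{ij}=a_{il}=a_{kj}=1$. Otherwise $a_{kl}=0$. The length of a row $(a_{k1},a_{k2},\dots)$ containing at least one but finitely many ones is $l-f+1$, where $f$ and $l$ are the smallest and the largest column index $j$ with $a_{kj}=1$. *)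

theory Defs
  imports Main
begin

text \<open>The greedy matrix A(n). Indices are 1-based; entries with a zero index are False
(never used). Entry a_kl is True iff it equals 1.\<close>

text \<open>Given the matrix M restricted to rows i < k (entries of rows < k correct),
 greedy_row_prefix n M k l is the list [a_k1, ..., a_kl].\<close>
primrec greedy_row_prefix :: "nat \<Rightarrow> (nat \<Rightarrow> nat \<Rightarrow> bool) \<Rightarrow> nat \<Rightarrow> nat \<Rightarrow> bool list" where
  "greedy_row_prefix n M k 0 = []"
| "greedy_row_prefix n M k (Suc l) =
    (let xs = greedy_row_prefix n M k l;
         c = Suc l;
         b = (length (filter id xs) < n + 1
              \<and> card {i. 1 \<le> i \<and> i < k \<and> M i c} < n + 1
              \<and> \<not> (\<exists>i j. 1 \<le> i \<and> i < k \<and> 1 \<le> j \<and> j < c \<and> M i j \<and> M i c \<and> xs ! (j - 1)))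
     in xs @ [b])"

primrec greedy_upto :: "nat \<Rightarrow> nat \<Rightarrow> (nat \<Rightarrow> nat \<Rightarrow> bool)" where
  "greedy_upto n 0 = (\<lambda>i j. False)"
| "greedy_upto n (Suc k) =
    (\<lambda>i j. if i = Suc k \<and> 1 \<le> j
           then greedy_row_prefix n (greedy_upto n k) (Suc k) j ! (j - 1)
           else greedy_upto n k i j)"

definition greedyA :: "nat \<Rightarrow> nat \<Rightarrow> nat \<Rightarrow> bool" where
  "greedyA n i j = greedy_upto n i i j"

definition row_ones :: "nat \<Rightarrow> nat \<Rightarrow> nat set" where
  "row_ones n k = {j. 1 \<le> j \<and> greedyA n k j}"

definition row_length :: "nat \<Rightarrow> nat \<Rightarrow> nat" where
  "row_length n k = Max (row_ones n k) - Min (row_ones n k) + 1"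

end

theory Submission
  imports Defs
begin
lemma gu: "greedy_upto n K i j = (i \<le> K \<and> greedy_upto n i i j)"
proof (induction K arbitrary: i)
  case 0 then show ?case by (cases i) auto
next
  case (Suc K)
  show ?case
  proof (cases "i = Suc K")
    case True then show ?thesis by simp
  next
    case False
    then have "greedy_upto n (Suc K) i j = greedy_upto n K i j" by simp
    also have "\<dots> = (i \<le> K \<and> greedy_upto n i i j)" by (rule Suc.IH)
    finally show ?thesis using False by auto
  qed
qed
lemma A0: "\<not> greedyA n i 0"
proof (cases i)
  case 0 then show ?thesis by (simp add: greedyA_def)
next
  case (Suc m)
  have "greedy_upto n (Suc m) (Suc m) 0 = greedy_upto n m (Suc m) 0" by simp
  also have "\<dots> = False" using gu[of n m "Suc m" 0] by simp
  finally show ?thesis using Suc by (simp add: greedyA_def)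
qed
lemma Azero: "\<not> greedyA n 0 j"
  unfolding greedyA_def by simp
lemma len_prefix: "length (greedy_row_prefix n M k l) = l"
  by (induction l) (simp_all add: Let_def)
lemma prefix_nth: "j < l \<Longrightarrow> greedy_row_prefix n M k l ! j = greedy_row_prefix n M k (Suc j) ! j"
proof (induction l)
  case 0 then show ?case by simp
next
  case (Suc l)
  show ?case
  proof (cases "j < l")
    case True
    then show ?thesis using Suc by (simp add: Let_def nth_append len_prefix)
  next
    case False
    then have "j = l" using Suc.prems by simp
    then show ?thesis by simp
  qed
qed
lemma A_unfold: "greedyA n (Suc k) j = (1 \<le> j \<and> greedy_row_prefix n (greedy_upto n k) (Suc k) j ! (j - 1))"
proof -
  have "\<not> greedy_upto n k (Suc k) j" using gu[of n k "Suc k" j] by (simp del: greedy_upto.simps)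
  then show ?thesis unfolding greedyA_def by simp
qed

definition pre :: "nat \<Rightarrow> nat \<Rightarrow> nat \<Rightarrow> nat set" where
  "pre n k c = {j. 1 \<le> j \<and> j < c \<and> greedyA n k j}"
definition col :: "nat \<Rightarrow> nat \<Rightarrow> nat \<Rightarrow> nat set" where
  "col n k c = {i. 1 \<le> i \<and> i < k \<and> greedyA n i c}"

lemma charA:
  assumes "1 \<le> k" "1 \<le> c"
  shows "greedyA n k c \<longleftrightarrow> (card (pre n k c) < n+1 \<and> card (col n k c) < n+1 \<and>
     \<not>(\<exists>i j. 1\<le>i \<and> i<k \<and> 1\<le>j \<and> j<c \<and> greedyA n i j \<and> greedyA n i c \<and> greedyA n k j))"
proof -
  obtain k' where k: "k = Suc k'" using assms by (cases k) auto
  obtain c' where c: "c = Suc c'" using assms by (cases c) auto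
  define xs where "xs = greedy_row_prefix n (greedy_upto n k') (Suc k') c'"
  have xs_nth: "xs ! (j-1) = greedyA n k j" if "1 \<le> j" "j < c" for j
  proof -
    have "xs ! (j-1) = greedy_row_prefix n (greedy_upto n k') (Suc k') (Suc (j-1)) ! (j-1)"
      unfolding xs_def using that c by (intro prefix_nth) auto
    also have "Suc (j-1) = j" using that by simp
    finally show ?thesis using A_unfold[of n k' j] that k by simp
  qed
  have M: "greedy_upto n k' i j = greedyA n i j" if "i < k" for i j
    using that k gu[of n k' i j] unfolding greedyA_def by simp
  have lenx: "length xs = c'" unfolding xs_def by (rule len_prefix)
  have "pre n k c = Suc ` {t. t < c' \<and> xs ! t}"
  proof (intro set_eqI iffI)
    fix j assume "j \<in> pre n k c"
    then have j: "1 \<le> j" "j < c" "greedyA n k j" unfolding pre_def by auto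
    then have "j = Suc (j-1)" "j - 1 < c'" "xs ! (j-1)" using xs_nth[OF j(1,2)] c by auto
    then show "j \<in> Suc ` {t. t < c' \<and> xs ! t}" by blast
  next
    fix j assume "j \<in> Suc ` {t. t < c' \<and> xs ! t}"
    then obtain t where t: "j = Suc t" "t < c'" "xs ! t" by auto
    then show "j \<in> pre n k c" using xs_nth[of j] c unfolding pre_def by auto
  qed
  then have "card (pre n k c) = card {t. t < c' \<and> xs ! t}" by (simp add: card_image)
  also have "\<dots> = length (filter id xs)" by (simp add: length_filter_conv_card lenx)
  finally have len: "length (filter id xs) = card (pre n k c)" by simp
  have colq: "{i. 1 \<le> i \<and> i < Suc k' \<and> greedy_upto n k' i (Suc c')} = col n k c"
    unfolding col_def using M k c by auto
  have "greedyA n k c = greedy_row_prefix n (greedy_upto n k') (Suc k') (Suc c') ! c'"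
    using A_unfold[of n k' c] k c by simp
  also have "\<dots> = (length (filter id xs) < n + 1
              \<and> card {i. 1 \<le> i \<and> i < Suc k' \<and> greedy_upto n k' i (Suc c')} < n + 1
              \<and> \<not> (\<exists>i j. 1 \<le> i \<and> i < Suc k' \<and> 1 \<le> j \<and> j < Suc c' \<and> greedy_upto n k' i j
                  \<and> greedy_upto n k' i (Suc c') \<and> xs ! (j - 1)))"
    by (simp add: Let_def nth_append len_prefix xs_def)
  also have "\<dots> = (card (pre n k c) < n+1 \<and> card (col n k c) < n+1 \<and>
     \<not>(\<exists>i j. 1\<le>i \<and> i<k \<and> 1\<le>j \<and> j<c \<and> greedyA n i j \<and> greedyA n i c \<and> greedyA n k j))"
    unfolding len colq using M xs_nth k c by (metis (no_types, lifting))
  finally show ?thesis .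
qed

lemma pre_fin: "finite (pre n k c)"
  by (rule finite_subset[of _ "{..<c}"]) (auto simp: pre_def)
lemma col_fin: "finite (col n k c)"
  by (rule finite_subset[of _ "{..<k}"]) (auto simp: col_def)

lemma pre_card: assumes "1 \<le> k" shows "card (pre n k c) \<le> n+1"
proof (induction c)
  case 0 then show ?case by (simp add: pre_def)
next
  case (Suc c)
  have eq: "pre n k (Suc c) = pre n k c \<union> (if 1 \<le> c \<and> greedyA n k c then {c} else {})"
    by (auto simp: pre_def less_Suc_eq)
  show ?case
  proof (cases "1 \<le> c \<and> greedyA n k c")
    case True
    then have "card (pre n k c) < n+1" using charA[of k c n] assms by auto
    then show ?thesis unfolding eq using True pre_fin[of n k c]
      by (simp add: card_insert_if)
  next
    case False
    then have "pre n k (Suc c) = pre n k c" using eq by auto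
    then show ?thesis using Suc.IH by simp
  qed
qed

lemma col_card: "card (col n k c) \<le> n+1"
proof (induction k)
  case 0 then show ?case by (simp add: col_def)
next
  case (Suc k)
  have eq: "col n (Suc k) c = col n k c \<union> (if 1 \<le> k \<and> greedyA n k c then {k} else {})"
    by (auto simp: col_def less_Suc_eq)
  show ?case
  proof (cases "1 \<le> k \<and> greedyA n k c")
    case True
    then have "1 \<le> c" using A0[of n k] by (cases c) auto
    then have "card (col n k c) < n+1" using charA[of k c n] True by auto
    then show ?thesis unfolding eq using True col_fin[of n k c]
      by (simp add: card_insert_if)
  next
    case False
    then have "col n (Suc k) c = col n k c" using eq by auto
    then show ?thesis using Suc.IH by simp
  qed
qed

lemma row_fin: assumes "1 \<le> k" shows "finite (row_ones n k) \<and> card (row_ones n k) \<le> n+1"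
proof -
  have fin: "finite (row_ones n k)"
  proof (rule ccontr)
    assume "infinite (row_ones n k)"
    then obtain B where B: "finite B" "card B = n+2" "B \<subseteq> row_ones n k"
      using infinite_arbitrarily_large by blast
    then have "B \<noteq> {}" by auto
    then have "B \<subseteq> pre n k (Suc (Max B))" using B Max_ge[OF B(1)]
      by (auto simp: pre_def row_ones_def le_imp_less_Suc)
    then have "card B \<le> card (pre n k (Suc (Max B)))" by (intro card_mono pre_fin)
    then show False using pre_card[OF assms, of n "Suc (Max B)"] B by simp
  qed
  show ?thesis
  proof (cases "row_ones n k = {}")
    case True then show ?thesis by simp
  next
    case False
    then have "row_ones n k \<subseteq> pre n k (Suc (Max (row_ones n k)))" using fin Max_ge[OF fin]
      by (auto simp: pre_def row_ones_def le_imp_less_Suc)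
    then have "card (row_ones n k) \<le> card (pre n k (Suc (Max (row_ones n k))))" by (intro card_mono pre_fin)
    then show ?thesis using pre_card[OF assms] fin by (meson le_trans)
  qed
qed

lemma row_ne: assumes "1 \<le> k" shows "row_ones n k \<noteq> {}"
proof
  assume E: "row_ones n k = {}"
  define U where "U = (\<Union>i\<in>{1..<k}. row_ones n i)"
  have "finite U" unfolding U_def using row_fin by auto
  define c where "c = Suc (Max (insert 0 U))"
  have cU: "c \<notin> U"
  proof
    assume "c \<in> U"
    then have "c \<le> Max (insert 0 U)" using \<open>finite U\<close> by simp
    then show False unfolding c_def by simp
  qed
  have c1: "1 \<le> c" unfolding c_def by simp
  have notA: "\<not> greedyA n i c" if "1 \<le> i" "i < k" for i
    using cU that c1 unfolding U_def row_ones_def by auto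
  have "pre n k c = {}" using E unfolding pre_def row_ones_def by auto
  moreover have "col n k c = {}" using notA unfolding col_def by auto
  ultimately have "greedyA n k c" using charA[OF assms c1, of n] notA by auto
  then have "c \<in> row_ones n k" using c1 unfolding row_ones_def by simp
  then show False using E by simp
qed

lemma card_UN_bound:
  assumes "finite I" "card I \<le> a" "\<And>i. i\<in>I \<Longrightarrow> finite (S i)" "\<And>i. i\<in>I \<Longrightarrow> card (S i) \<le> b"
  shows "card (\<Union>i\<in>I. S i) \<le> a*b"
proof -
  have "card (\<Union>i\<in>I. S i) \<le> (\<Sum>i\<in>I. card (S i))" by (rule card_UN_le[OF assms(1)])
  also have "\<dots> \<le> card I * b" using sum_bounded_above[of I "\<lambda>i. card (S i)" b] assms(4) by simp
  also have "\<dots> \<le> a*b" using assms(2) by simp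
  finally show ?thesis .
qed

lemma final_arith:
  fixes L x n :: nat
  assumes "n \<ge> 1" "L \<le> (n+1) + n*(n*n) + x" "x*(n+1) \<le> n*(n*(n*n))"
  shows "int L < 2 * int n ^ 3 - int n * (int n - 3)"
proof -
  have h: "int x * (int n + 1) \<le> int n ^ 4"
  proof -
    have "int (x*(n+1)) \<le> int (n*(n*(n*n)))" using assms(3) by linarith
    then show ?thesis by (simp add: eval_nat_numeral algebra_simps)
  qed
  have "int x \<le> int n^3 - int n^2 + int n - 1"
  proof (rule ccontr)
    assume "\<not> ?thesis"
    then have "int x \<ge> int n^3 - int n^2 + int n" by simp
    then have "int x * (int n+1) \<ge> (int n^3 - int n^2 + int n)*(int n+1)"
      by (rule mult_right_mono) simp
    also have "(int n^3 - int n^2 + int n)*(int n+1) = int n^4 + int n"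
      by (simp add: algebra_simps eval_nat_numeral)
    finally show False using h assms(1) by linarith
  qed
  moreover have "int L \<le> int n + 1 + int n^3 + int x"
  proof -
    have "int L \<le> int ((n+1) + n*(n*n) + x)" using assms(2) by (simp only: of_nat_le_iff)
    then show ?thesis by (simp add: eval_nat_numeral)
  qed
  ultimately show ?thesis using assms(1) by (simp add: algebra_simps eval_nat_numeral)
qed

theorem theorem3p1:
  fixes n k :: nat
  assumes "n \<ge> 1" and "k \<ge> 1"
  shows "row_ones n k \<noteq> {} \<and> finite (row_ones n k)
         \<and> int (row_length n k) < 2 * int n ^ 3 - int n * (int n - 3)"
proof -
  define Rw where "Rw = row_ones n k"
  have finRw: "finite Rw" and cardO: "card Rw \<le> n+1" using row_fin[OF assms(2), of n] Rw_def by auto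
  have neO: "Rw \<noteq> {}" using row_ne[OF assms(2)] Rw_def by auto
  have O_iff: "x \<in> Rw \<longleftrightarrow> 1 \<le> x \<and> greedyA n k x" for x unfolding Rw_def row_ones_def by simp
  define f where "f = Min Rw"
  define l where "l = Max Rw"
  have fO: "f \<in> Rw" and lO: "l \<in> Rw" using finRw neO f_def l_def by auto
  have fl: "f \<le> l" using finRw neO f_def l_def by simp
  have Ominmax: "x \<in> Rw \<Longrightarrow> f \<le> x \<and> x \<le> l" for x using finRw f_def l_def by simp
  have f1: "1 \<le> f" and Af: "greedyA n k f" using fO O_iff by auto
  have l1: "1 \<le> l" and Al: "greedyA n k l" using lO O_iff by auto
  have prel: "card (pre n k l) < n+1" using charA[OF assms(2) l1, of n] Al by simp
  have colO: "card (col n k j) \<le> n" if "j \<in> Rw" for j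
    using charA[OF assms(2), of j n] that O_iff by auto
  define B where "B = {c. f < c \<and> c < l \<and> (\<exists>i j. 1\<le>i \<and> i<k \<and> 1\<le>j \<and> j<c \<and> greedyA n i j \<and> greedyA n i c \<and> greedyA n k j)}"
  define F where "F = {c. f < c \<and> c < l \<and> n+1 \<le> card (col n k c)}"
  have finB: "finite B" by (rule finite_subset[of _ "{..<l}"]) (auto simp: B_def)
  have finF: "finite F" by (rule finite_subset[of _ "{..<l}"]) (auto simp: F_def)
  have cover: "{f..l} \<subseteq> Rw \<union> B \<union> F"
  proof
    fix c assume c: "c \<in> {f..l}"
    show "c \<in> Rw \<union> B \<union> F"
    proof (cases "c \<in> Rw")
      case True then show ?thesis by simp
    next
      case False
      then have fc: "f < c" "c < l" using c fO lO by (auto simp: order_le_less)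
      then have c1: "1 \<le> c" using f1 by simp
      have nA: "\<not> greedyA n k c" using False O_iff c1 by simp
      have "pre n k c \<subseteq> pre n k l" using fc unfolding pre_def by auto
      then have "card (pre n k c) < n+1" using prel card_mono[OF pre_fin] by (meson le_less_trans)
      then have "\<not> card (col n k c) < n+1 \<or> (\<exists>i j. 1\<le>i \<and> i<k \<and> 1\<le>j \<and> j<c \<and> greedyA n i j \<and> greedyA n i c \<and> greedyA n k j)"
        using charA[OF assms(2) c1, of n] nA by blast
      then show ?thesis unfolding B_def F_def using fc by auto
    qed
  qed
  have cardB: "card B \<le> n*(n*n)"
  proof -
    have sub: "B \<subseteq> (\<Union>j\<in>Rw-{l}. \<Union>i\<in>col n k j. (row_ones n i - {j}))"
    proof
      fix c assume "c \<in> B"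
      then obtain i j where ij: "f < c" "c < l" "1\<le>i" "i<k" "1\<le>j" "j<c" "greedyA n i j" "greedyA n i c" "greedyA n k j"
        unfolding B_def by blast
      then have "j \<in> Rw - {l}" "i \<in> col n k j" "c \<in> row_ones n i - {j}"
        using O_iff by (auto simp: col_def row_ones_def)
      then show "c \<in> (\<Union>j\<in>Rw-{l}. \<Union>i\<in>col n k j. (row_ones n i - {j}))" by blast
    qed
    have bnd: "card (\<Union>j\<in>Rw-{l}. \<Union>i\<in>col n k j. (row_ones n i - {j})) \<le> n*(n*n)"
    proof (rule card_UN_bound)
      show "finite (Rw - {l})" using finRw by simp
      show "card (Rw - {l}) \<le> n" using cardO lO finRw by simp
    next
      fix j assume j: "j \<in> Rw - {l}"
      have rowi: "finite (row_ones n i - {j}) \<and> card (row_ones n i - {j}) \<le> n" if "i \<in> col n k j" for i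
      proof -
        have i1: "1 \<le> i" and "greedyA n i j" using that by (auto simp: col_def)
        then have "j \<in> row_ones n i" using j O_iff by (auto simp: row_ones_def)
        then show ?thesis using row_fin[OF i1, of n] by (simp; linarith)
      qed
      show "finite (\<Union>i\<in>col n k j. (row_ones n i - {j}))" using rowi col_fin by blast
      show "card (\<Union>i\<in>col n k j. (row_ones n i - {j})) \<le> n*n"
        by (rule card_UN_bound) (use col_fin colO j rowi in auto)
    qed
    have "finite (\<Union>j\<in>Rw-{l}. \<Union>i\<in>col n k j. (row_ones n i - {j}))"
    proof (intro finite_UN_I)
      show "finite (Rw - {l})" using finRw by simp
      show "finite (col n k j)" for j by (rule col_fin)
      fix j i assume "i \<in> col n k j"
      then have "1 \<le> i" by (simp add: col_def)
      then show "finite (row_ones n i - {j})" using row_fin by simp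
    qed
    then show ?thesis using card_mono[OF _ sub] bnd by (meson le_trans)
  qed
  define R where "R = col n k f"
  define Q where "Q i' = ({c\<in>row_ones n i'. f<c} \<times> {i'}) \<union>
      (\<Union>j\<in>{j\<in>row_ones n i'. j<f}. \<Union>i\<in>(col n k j - {i'}). {c\<in>row_ones n i. f<c} \<times> {i})" for i'
  have Qb: "finite (Q i') \<and> card (Q i') \<le> n*(n*n)" if "i' \<in> R" for i'
  proof -
    have i'1: "1 \<le> i'" and Ai'f: "greedyA n i' f" using that by (auto simp: R_def col_def)
    have finr: "finite (row_ones n i')" and cr: "card (row_ones n i') \<le> n+1" using row_fin[OF i'1] by auto
    define X where "X = {c\<in>row_ones n i'. f<c}"
    define M where "M = {j\<in>row_ones n i'. j<f}"
    have "insert f (X \<union> M) \<subseteq> row_ones n i'" using Ai'f f1 by (auto simp: X_def M_def row_ones_def)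
    moreover have "finite X" "finite M" using finr by (auto simp: X_def M_def)
    moreover have "X \<inter> M = {}" "f \<notin> X \<union> M" by (auto simp: X_def M_def)
    ultimately have "card (insert f (X \<union> M)) = card X + card M + 1" and
       "card (insert f (X \<union> M)) \<le> card (row_ones n i')"
      by (simp add: card_Un_disjoint, intro card_mono[OF finr], simp)
    then have "card X + card M + 1 \<le> n+1" using cr by linarith
    then have XM: "card X + card M \<le> n" by simp
    have inner: "finite (\<Union>i\<in>(col n k j - {i'}). {c\<in>row_ones n i. f<c} \<times> {i}) \<and>
       card (\<Union>i\<in>(col n k j - {i'}). {c\<in>row_ones n i. f<c} \<times> {i}) \<le> n*n" if "j \<in> M" for j
    proof -
      have j1: "1 \<le> j" "j < f" and Ai'j: "greedyA n i' j" using that by (auto simp: M_def row_ones_def)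
      have i'c: "i' \<in> col n k j" using that \<open>i' \<in> R\<close> Ai'j by (auto simp: R_def col_def)
      have cc: "card (col n k j - {i'}) \<le> n" using col_card[of n k j] i'c col_fin by simp
      have each: "finite ({c\<in>row_ones n i. f<c} \<times> {i}) \<and> card ({c\<in>row_ones n i. f<c} \<times> {i}) \<le> n"
        if "i \<in> col n k j - {i'}" for i
      proof -
        have i1: "1 \<le> i" and "greedyA n i j" using that by (auto simp: col_def)
        then have "j \<in> row_ones n i" using j1 by (auto simp: row_ones_def)
        moreover have "{c\<in>row_ones n i. f<c} \<subseteq> row_ones n i - {j}" using j1 by auto
        moreover have "finite (row_ones n i)" "card (row_ones n i) \<le> n+1" using row_fin[OF i1, of n] by auto
        ultimately have "card {c\<in>row_ones n i. f<c} \<le> card (row_ones n i - {j})"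
          "card (row_ones n i - {j}) = card (row_ones n i) - 1"
          by (intro card_mono, simp_all)
        then have "card {c\<in>row_ones n i. f<c} \<le> n" using \<open>card (row_ones n i) \<le> n+1\<close> by linarith
        then show ?thesis using row_fin[OF i1, of n] by (simp add: card_cartesian_product)
      qed
      show ?thesis
      proof
        show "finite (\<Union>i\<in>(col n k j - {i'}). {c\<in>row_ones n i. f<c} \<times> {i})" using each col_fin by blast
        show "card (\<Union>i\<in>(col n k j - {i'}). {c\<in>row_ones n i. f<c} \<times> {i}) \<le> n*n"
          by (rule card_UN_bound) (use col_fin cc each in auto)
      qed
    qed
    have part2: "card (\<Union>j\<in>M. \<Union>i\<in>(col n k j - {i'}). {c\<in>row_ones n i. f<c} \<times> {i}) \<le> card M * (n*n)"
      by (rule card_UN_bound) (use \<open>finite M\<close> inner in auto)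
    have fin2: "finite (\<Union>j\<in>M. \<Union>i\<in>(col n k j - {i'}). {c\<in>row_ones n i. f<c} \<times> {i})"
      using \<open>finite M\<close> inner by blast
    have QX: "Q i' = (X \<times> {i'}) \<union> (\<Union>j\<in>M. \<Union>i\<in>(col n k j - {i'}). {c\<in>row_ones n i. f<c} \<times> {i})"
      unfolding Q_def X_def M_def by simp
    have cQ: "card (Q i') \<le> card (X \<times> {i'}) + card (\<Union>j\<in>M. \<Union>i\<in>(col n k j - {i'}). {c\<in>row_ones n i. f<c} \<times> {i})"
      unfolding QX by (rule card_Un_le)
    have finQ: "finite (Q i')" unfolding QX using fin2 \<open>finite X\<close> by simp
    have "card (Q i') \<le> card X + card M * (n*n)"
      using cQ part2 \<open>finite X\<close> by (simp add: card_cartesian_product)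
    also have "card X + card M * (n*n) \<le> (card X + card M) * (n*n)"
      using assms(1) by (simp add: algebra_simps)
    also have "\<dots> \<le> n * (n*n)" using XM by (rule mult_right_mono) simp
    finally show ?thesis using finQ by simp
  qed
  have covF: "Sigma F (col n k) \<subseteq> (\<Union>i'\<in>R. Q i')"
  proof
    fix p assume "p \<in> Sigma F (col n k)"
    then obtain c i where p: "p = (c,i)" "c \<in> F" "i \<in> col n k c" by auto
    then have fc: "f < c" and i1: "1 \<le> i" and ik: "i < k" and Aic: "greedyA n i c"
      by (auto simp: F_def col_def)
    have c1: "1 \<le> c" using fc f1 by simp
    have crow: "c \<in> {c\<in>row_ones n i. f<c}" using Aic c1 fc by (auto simp: row_ones_def)
    show "p \<in> (\<Union>i'\<in>R. Q i')"
    proof (cases "greedyA n i f")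
      case True
      then have "i \<in> R" using i1 ik by (auto simp: R_def col_def)
      then show ?thesis using p crow unfolding Q_def by blast
    next
      case False
      have "card (pre n i c) < n+1" using charA[OF i1 c1, of n] Aic by simp
      moreover have "pre n i f \<subseteq> pre n i c" using fc by (auto simp: pre_def)
      ultimately have pf: "card (pre n i f) < n+1" using card_mono[OF pre_fin] by (meson le_less_trans)
      have "col n i f \<subseteq> col n k f" using ik by (auto simp: col_def)
      then have "card (col n i f) \<le> card (col n k f)" by (rule card_mono[OF col_fin])
      then have "card (col n i f) < n+1" using colO[OF fO] by linarith
      then obtain i' j where ij: "1\<le>i'" "i'<i" "1\<le>j" "j<f" "greedyA n i' j" "greedyA n i' f" "greedyA n i j"
        using charA[OF i1 f1, of n] False pf by blast
      have "i' \<in> R" using ij ik by (auto simp: R_def col_def)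
      moreover have "j \<in> {j\<in>row_ones n i'. j<f}" using ij by (auto simp: row_ones_def)
      moreover have "i \<in> col n k j - {i'}" using ij i1 ik by (auto simp: col_def)
      ultimately show ?thesis using p crow unfolding Q_def by blast
    qed
  qed
  have cardR: "card R \<le> n" using colO[OF fO] R_def by simp
  have finR: "finite R" using col_fin R_def by simp
  have bndQ: "card (\<Union>i'\<in>R. Q i') \<le> n*(n*(n*n))"
    by (rule card_UN_bound) (use finR cardR Qb in auto)
  have finUQ: "finite (\<Union>i'\<in>R. Q i')" using finR Qb by blast
  have "card F * (n+1) \<le> (\<Sum>c\<in>F. card (col n k c))"
    using sum_bounded_below[of F "n+1" "\<lambda>c. card (col n k c)"] by (simp add: F_def)
  also have "\<dots> = card (Sigma F (col n k))" using card_SigmaI[of F "col n k"] finF col_fin by simp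
  also have "\<dots> \<le> card (\<Union>i'\<in>R. Q i')" by (rule card_mono[OF finUQ covF])
  also have "\<dots> \<le> n*(n*(n*n))" by (rule bndQ)
  finally have cardF: "card F * (n+1) \<le> n*(n*(n*n))" .
  have "row_length n k = card {f..l}" unfolding row_length_def Rw_def[symmetric] f_def[symmetric] l_def[symmetric]
    using fl by simp
  also have "\<dots> \<le> card (Rw \<union> B \<union> F)" by (rule card_mono) (use finRw finB finF cover in auto)
  also have "\<dots> \<le> card (Rw \<union> B) + card F" by (rule card_Un_le)
  also have "\<dots> \<le> card Rw + card B + card F" using card_Un_le[of Rw B] by simp
  also have "\<dots> \<le> (n+1) + n*(n*n) + card F" using cardO cardB by simp
  finally have "row_length n k \<le> (n+1) + n*(n*n) + card F" .
  then have "int (row_length n k) < 2 * int n ^ 3 - int n * (int n - 3)"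
    using final_arith[OF assms(1) _ cardF] by blast
  then show ?thesis using neO finRw Rw_def by simp
qed
end
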